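(* Let $n\ge 1$, $m\ge 2$ and $k\in\{0,\dots,n-1\}$, and let $\mathcal{C}^k_{ac}$ be the class of all complete acyclic $k$-bounded CP-nets over $n$ variables of domain size $m$, over the instance space $\mathcal{X}_{swap}$. Then \[\mathrm{RTD}(\mathcal{C}^k_{ac})=(m-1)\mathcal{M}_k=(m-1)(n-k)m^k+m^k-1.\]
   Context: Variables $V=\{v_1,\dots,v_n\}$, each $v_i$ with a finite domain $D_{v_i}$ of size $m$. An outcome assigns a value to every variable; $\mathcal{O}_X$ denotes assignments to $X\subseteq V$. A CP-net specifies for each $v_i$ a parent set $Pa(v_i)\subseteq V\setminus\{v_i\}$ and, for each context $\gamma\in\mathcal{O}_{Pa(v_i)}$, either a strict total order $\succ^{v_i}_\gamma$ on $D_{v_i}$ or nothing; it is complete if an order is given for every variable and context; parents are non-dummy (each parent actually affects the preferences). It is acyclic if the graph with edges $(v_j,v_i)$ for $v_j\in Pa(v_i)$ is acyclic, and $k$-bounded if all parent sets have size $\le k$. Improving flip: changing only $v_i$ from $o[v_i]$ to a value preferred under $\succ^{v_i}_{o[Pa(v_i)]}$; $o'\succ o$ iff a nonempty sequence of improving flips leads from $o$ to $o'$. A swap is an ordered pair $x=(x.1,x.2)$ of outcomes differing in exactly one variable; $\mathcal{X}_{swap}$ contains, for each unordered such pair, exactly one of its two orderings (fixed arbitrarily). A CP-net $N$ is the concept $c_N(x)=1$ iff $x.1\succ x.2$. For a concept class $\mathcal{C}$ and $c\in\mathcal{C}$, a teaching set for $c$ is a set of labeled examples with which $c$ is the only consistent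 concept in $\mathcal{C}$; $\mathrm{TD}(c,\mathcal{C})$ is the minimum size of a teaching set, $\mathrm{TD}_{min}(\mathcal{C})=\min_{c\in\mathcal{C}}\mathrm{TD}(c,\mathcal{C})$. Recursive teaching dimension: $\mathcal{C}_0=\mathcal{C}$, $\mathcal{C}_{i+1}=\mathcal{C}_i\setminus\{c\in\mathcal{C}_i:\mathrm{TD}(c,\mathcal{C}_i)=\mathrm{TD}_{min}(\mathcal{C}_i)\}$ while $\mathcal{C}_i\neq\emptyset$, and $\mathrm{RTD}(\mathcal{C})=\max_i\mathrm{TD}_{min}(\mathcal{C}_i)$. $\mathcal{M}_k=(n-k)m^k+\frac{m^k-1}{m-1}$. *)

theory Defs
  imports "HOL-Library.FuncSet"
begin

(* Variables are v_0,...,v_{n-1} (indices < n); every domain is {..<m}.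
   An outcome is an element of PiE {..<n} (\<lambda>_. {..<m}). *)

definition outcomes :: "nat \<Rightarrow> nat \<Rightarrow> (nat \<Rightarrow> nat) set" where
  "outcomes n m = Pi\<^sub>E {..<n} (\<lambda>_. {..<m})"

definition assignments :: "nat set \<Rightarrow> nat \<Rightarrow> (nat \<Rightarrow> nat) set" where
  "assignments X m = Pi\<^sub>E X (\<lambda>_. {..<m})"

definition swaps :: "nat \<Rightarrow> nat \<Rightarrow> ((nat \<Rightarrow> nat) \<times> (nat \<Rightarrow> nat)) set" where
  "swaps n m = {(a, b). a \<in> outcomes n m \<and> b \<in> outcomes n m \<and> card {i. i < n \<and> a i \<noteq> b i} = 1}"

definition is_swap_instance_space ::
  "nat \<Rightarrow> nat \<Rightarrow> ((nat \<Rightarrow> nat) \<times> (nat \<Rightarrow> nat)) set \<Rightarrow> bool" where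
  "is_swap_instance_space n m X \<longleftrightarrow>
     X \<subseteq> swaps n m \<and> (\<forall>a b. (a, b) \<in> swaps n m \<longrightarrow> ((a, b) \<in> X \<longleftrightarrow> (b, a) \<notin> X))"

(* A CP-net is given by a parent function Pa and, for each variable i and context
   gamma (assignment to Pa i), a relation pref i gamma on values, where
   (a, b) \<in> pref i gamma means  a \<succ>^{v_i}_gamma b. *)
type_synonym cpnet = "(nat \<Rightarrow> nat set) \<times> (nat \<Rightarrow> (nat \<Rightarrow> nat) \<Rightarrow> nat rel)"

definition complete_cpnet :: "nat \<Rightarrow> nat \<Rightarrow> cpnet \<Rightarrow> bool" where
  "complete_cpnet n m N \<longleftrightarrow>
     (let Pa = fst N; pref = snd N in
       (\<forall>i<n. Pa i \<subseteq> {..<n} - {i}) \<and>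
       (\<forall>i<n. \<forall>\<gamma>\<in>assignments (Pa i) m.
           pref i \<gamma> \<subseteq> {..<m} \<times> {..<m} \<and> strict_linear_order_on {..<m} (pref i \<gamma>)) \<and>
       (\<forall>i<n. \<forall>j\<in>Pa i. \<exists>\<gamma>\<in>assignments (Pa i) m. \<exists>\<gamma>'\<in>assignments (Pa i) m.
           (\<forall>l\<in>Pa i - {j}. \<gamma> l = \<gamma>' l) \<and> pref i \<gamma> \<noteq> pref i \<gamma>'))"

definition acyclic_cpnet :: "nat \<Rightarrow> cpnet \<Rightarrow> bool" where
  "acyclic_cpnet n N \<longleftrightarrow> acyclic {(j, i). i < n \<and> j \<in> fst N i}"

definition k_bounded_cpnet :: "nat \<Rightarrow> nat \<Rightarrow> cpnet \<Rightarrow> bool" where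
  "k_bounded_cpnet n k N \<longleftrightarrow> (\<forall>i<n. card (fst N i) \<le> k)"

(* improving flips: (o, o') means o' is obtained from o by one improving flip *)
definition improving_flip :: "nat \<Rightarrow> nat \<Rightarrow> cpnet \<Rightarrow> ((nat \<Rightarrow> nat) \<times> (nat \<Rightarrow> nat)) set" where
  "improving_flip n m N = {(o1, o2). o1 \<in> outcomes n m \<and> o2 \<in> outcomes n m \<and>
      (\<exists>i<n. (\<forall>l. l \<noteq> i \<longrightarrow> o2 l = o1 l) \<and>
              (o2 i, o1 i) \<in> snd N i (restrict o1 (fst N i)))}"

definition cp_succ :: "nat \<Rightarrow> nat \<Rightarrow> cpnet \<Rightarrow> (nat \<Rightarrow> nat) \<Rightarrow> (nat \<Rightarrow> nat) \<Rightarrow> bool" where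
  "cp_succ n m N p' p \<longleftrightarrow> (p, p') \<in> (improving_flip n m N)\<^sup>+"

definition cp_concept :: "nat \<Rightarrow> nat \<Rightarrow> ((nat \<Rightarrow> nat) \<times> (nat \<Rightarrow> nat)) set \<Rightarrow> cpnet
    \<Rightarrow> ((nat \<Rightarrow> nat) \<times> (nat \<Rightarrow> nat)) set" where
  "cp_concept n m X N = {x \<in> X. cp_succ n m N (fst x) (snd x)}"

definition C_ac :: "nat \<Rightarrow> nat \<Rightarrow> nat \<Rightarrow> ((nat \<Rightarrow> nat) \<times> (nat \<Rightarrow> nat)) set
    \<Rightarrow> ((nat \<Rightarrow> nat) \<times> (nat \<Rightarrow> nat)) set set" where
  "C_ac n m k X = cp_concept n m X ` {N. complete_cpnet n m N \<and> acyclic_cpnet n N \<and> k_bounded_cpnet n k N}"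

definition teaching_set :: "'x set \<Rightarrow> 'x set set \<Rightarrow> 'x set \<Rightarrow> 'x set \<Rightarrow> bool" where
  "teaching_set X C c S \<longleftrightarrow> S \<subseteq> X \<and> finite S \<and>
     (\<forall>c'\<in>C. (\<forall>x\<in>S. x \<in> c' \<longleftrightarrow> x \<in> c) \<longrightarrow> c' = c)"

definition TD :: "'x set \<Rightarrow> 'x set set \<Rightarrow> 'x set \<Rightarrow> nat" where
  "TD X C c = (LEAST t. \<exists>S. teaching_set X C c S \<and> card S = t)"

definition TD_min :: "'x set \<Rightarrow> 'x set set \<Rightarrow> nat" where
  "TD_min X C = Min ((TD X C) ` C)"

fun rtd_layer :: "'x set \<Rightarrow> 'x set set \<Rightarrow> nat \<Rightarrow> 'x set set" where
  "rtd_layer X C 0 = C"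
| "rtd_layer X C (Suc i) =
     (let Ci = rtd_layer X C i in Ci - {c \<in> Ci. TD X Ci c = TD_min X Ci})"

definition RTD :: "'x set \<Rightarrow> 'x set set \<Rightarrow> nat" where
  "RTD X C = Max {TD_min X (rtd_layer X C i) | i. rtd_layer X C i \<noteq> {}}"

definition M_k :: "nat \<Rightarrow> nat \<Rightarrow> nat \<Rightarrow> nat" where
  "M_k n m k = (n - k) * m ^ k + (m ^ k - 1) div (m - 1)"

end

theory Submission
  imports Defs
begin

definition valid :: "nat \<Rightarrow> nat \<Rightarrow> nat \<Rightarrow> cpnet \<Rightarrow> bool" where
  "valid n m k N \<longleftrightarrow> complete_cpnet n m N \<and> acyclic_cpnet n N \<and> k_bounded_cpnet n k N"

lemma complete_cpnetD:
  assumes "complete_cpnet n m N" "i < n"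
  shows "fst N i \<subseteq> {..<n} - {i}"
    "\<And>\<gamma>. \<gamma> \<in> assignments (fst N i) m \<Longrightarrow> snd N i \<gamma> \<subseteq> {..<m} \<times> {..<m} \<and> strict_linear_order_on {..<m} (snd N i \<gamma>)"
    "\<And>j. j \<in> fst N i \<Longrightarrow> \<exists>\<gamma>\<in>assignments (fst N i) m. \<exists>\<gamma>'\<in>assignments (fst N i) m. (\<forall>l\<in>fst N i - {j}. \<gamma> l = \<gamma>' l) \<and> snd N i \<gamma> \<noteq> snd N i \<gamma>'"
  using assms unfolding complete_cpnet_def Let_def by auto

lemma swapsD:
  assumes "(a, b) \<in> swaps n m"
  shows "a \<in> outcomes n m" "b \<in> outcomes n m" "\<exists>i<n. a i \<noteq> b i \<and> (\<forall>l. l \<noteq> i \<longrightarrow> a l = b l)"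
proof -
  show a: "a \<in> outcomes n m" and b: "b \<in> outcomes n m" using assms by (auto simp: swaps_def)
  have "card {i. i < n \<and> a i \<noteq> b i} = 1" using assms by (auto simp: swaps_def)
  then obtain i where i: "{i. i < n \<and> a i \<noteq> b i} = {i}" by (auto simp: card_1_singleton_iff)
  have "a l = b l" if "l \<noteq> i" for l
  proof (cases "l < n")
    case True then show ?thesis using i that by blast
  next
    case False then show ?thesis using a b by (auto simp: outcomes_def PiE_def extensional_def)
  qed
  then show "\<exists>i<n. a i \<noteq> b i \<and> (\<forall>l. l \<noteq> i \<longrightarrow> a l = b l)" using i by blast
qed

lemma swapsI:
  assumes "a \<in> outcomes n m" "b \<in> outcomes n m" "i < n" "a i \<noteq> b i" "\<forall>l. l \<noteq> i \<longrightarrow> a l = b l"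
  shows "(a, b) \<in> swaps n m"
proof -
  have "{j. j < n \<and> a j \<noteq> b j} = {i}" using assms by auto
  then show ?thesis using assms by (simp add: swaps_def)
qed

lemma rest_assign:
  assumes "a \<in> outcomes n m" "Y \<subseteq> {..<n}"
  shows "restrict a Y \<in> assignments Y m"
  using assms by (auto simp: outcomes_def assignments_def PiE_def)

definition rk :: "'a rel \<Rightarrow> 'a \<Rightarrow> nat" where "rk r x = card {y. (x, y) \<in> r}"

lemma rk_props:
  assumes fin: "finite A" and sub: "r \<subseteq> A \<times> A" and slo: "strict_linear_order_on A r"
  shows "\<And>x y. x \<in> A \<Longrightarrow> y \<in> A \<Longrightarrow> (x, y) \<in> r \<longleftrightarrow> rk r y < rk r x"
    and "inj_on (rk r) A" and "rk r ` A = {..<card A}"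
proof -
  have tr: "trans r" and irr: "\<And>x. (x,x) \<notin> r" and tot: "total_on A r"
    using slo by (auto simp: strict_linear_order_on_def irrefl_def)
  have finx: "finite {y. (x, y) \<in> r}" for x
    by (rule finite_subset[of _ A]) (use sub fin in auto)
  have lt: "rk r y < rk r x" if "(x, y) \<in> r" for x y
  proof -
    have "{z. (y, z) \<in> r} \<subset> {z. (x, z) \<in> r}"
    proof
      show "{z. (y, z) \<in> r} \<subseteq> {z. (x, z) \<in> r}" using tr that by (auto dest: transD)
      show "{z. (y, z) \<in> r} \<noteq> {z. (x, z) \<in> r}" using that irr by blast
    qed
    then show ?thesis unfolding rk_def by (rule psubset_card_mono[OF finx])
  qed
  show iff: "(x, y) \<in> r \<longleftrightarrow> rk r y < rk r x" if "x \<in> A" "y \<in> A" for x y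
  proof
    assume "rk r y < rk r x"
    then have "x \<noteq> y" by auto
    then have "(x,y) \<in> r \<or> (y,x) \<in> r" using tot that by (auto simp: total_on_def)
    then show "(x,y) \<in> r" using lt \<open>rk r y < rk r x\<close> by fastforce
  qed (rule lt)
  show inj: "inj_on (rk r) A"
  proof (rule inj_onI)
    fix x y assume "x \<in> A" "y \<in> A" "rk r x = rk r y"
    then show "x = y" using tot lt by (metis less_irrefl total_on_def)
  qed
  have "rk r ` A \<subseteq> {..<card A}"
  proof
    fix z assume "z \<in> rk r ` A"
    then obtain x where x: "x \<in> A" "z = rk r x" by auto
    have "{y. (x, y) \<in> r} \<subseteq> A - {x}" using sub irr by auto
    then have "rk r x \<le> card (A - {x})" unfolding rk_def by (rule card_mono[rotated]) (use fin in auto)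
    also have "\<dots> < card A" by (rule card_Diff1_less[OF fin x(1)])
    finally show "z \<in> {..<card A}" using x by simp
  qed
  moreover have "card (rk r ` A) = card {..<card A}" using inj by (simp add: card_image)
  ultimately show "rk r ` A = {..<card A}" by (intro card_subset_eq) auto
qed

lemma slo_of_inj:
  fixes g :: "'a \<Rightarrow> nat"
  assumes "inj_on g A"
  shows "strict_linear_order_on A {(p, q). p \<in> A \<and> q \<in> A \<and> g q < g p}"
  unfolding strict_linear_order_on_def
proof (intro conjI)
  show "trans {(p, q). p \<in> A \<and> q \<in> A \<and> g q < g p}"
    by (auto simp: trans_def)
  show "irrefl {(p, q). p \<in> A \<and> q \<in> A \<and> g q < g p}" by (simp add: irrefl_def)
  show "total_on A {(p, q). p \<in> A \<and> q \<in> A \<and> g q < g p}"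
  proof (unfold total_on_def, intro ballI impI)
    fix x y assume xy: "x \<in> A" "y \<in> A" "x \<noteq> y"
    then have "g x \<noteq> g y" using assms by (meson inj_onD)
    then have "g x < g y \<or> g y < g x" by linarith
    then show "(x, y) \<in> {(p, q). p \<in> A \<and> q \<in> A \<and> g q < g p} \<or> (y, x) \<in> {(p, q). p \<in> A \<and> q \<in> A \<and> g q < g p}"
      using xy by blast
  qed
qed

lemma topo:
  fixes n :: nat and P :: "nat \<Rightarrow> nat set"
  assumes "\<forall>i<n. P i \<subseteq> {..<n} - {i}" and "acyclic {(j, i). i < n \<and> j \<in> P i}"
  shows "\<exists>\<pi>. bij_betw \<pi> {..<n} {..<n} \<and> (\<forall>i<n. \<forall>j\<in>P i. \<pi> j < \<pi> i)"
proof -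
  define E where "E = {(j, i). i < n \<and> j \<in> P i}"
  have Esub: "E \<subseteq> {..<n} \<times> {..<n}" using assms(1) by (auto simp: E_def)
  then have Etr: "E\<^sup>+ \<subseteq> {..<n} \<times> {..<n}" by (rule trancl_subset_Sigma)
  define h where "h i = card {j. (j, i) \<in> E\<^sup>+}" for i
  have hlt: "h j < h i" if "i < n" "j \<in> P i" for i j
  proof -
    have ji: "(j, i) \<in> E" using that by (auto simp: E_def)
    have ps: "{l. (l, j) \<in> E\<^sup>+} \<subset> {l. (l, i) \<in> E\<^sup>+}"
    proof
      show "{l. (l, j) \<in> E\<^sup>+} \<subseteq> {l. (l, i) \<in> E\<^sup>+}" using ji by (blast intro: trancl_into_trancl)
      have "(j, j) \<notin> E\<^sup>+" using assms(2) by (auto simp: E_def acyclic_def)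
      moreover have "(j, i) \<in> E\<^sup>+" using ji by auto
      ultimately show "{l. (l, j) \<in> E\<^sup>+} \<noteq> {l. (l, i) \<in> E\<^sup>+}" by blast
    qed
    have "{l. (l, i) \<in> E\<^sup>+} \<subseteq> {..<n}" using Etr by blast
    then have "finite {l. (l, i) \<in> E\<^sup>+}" using finite_subset by blast
    then show ?thesis unfolding h_def using ps by (rule psubset_card_mono)
  qed
  define key where "key i = h i * n + i" for i
  have keyinj: "inj_on key {..<n}"
  proof (rule inj_onI)
    fix x y assume xy: "x \<in> {..<n}" "y \<in> {..<n}" "key x = key y"
    then have "(x + h x * n) mod n = (y + h y * n) mod n" by (simp add: key_def add.commute)
    then have "x mod n = y mod n" by (simp only: mod_mult_self1)
    then show "x = y" using xy by simp
  qed
  have keylt: "key j < key i" if "i < n" "j \<in> P i" for i j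
  proof -
    have "j < n" using assms(1) that by auto
    have "Suc (h j) \<le> h i" using hlt[OF that] by simp
    then have "Suc (h j) * n \<le> h i * n" by (rule mult_le_mono1)
    then have "n + h j * n \<le> h i * n" by simp
    then show ?thesis using \<open>j < n\<close> unfolding key_def by linarith
  qed
  define r where "r = {(p, q). p \<in> {..<n} \<and> q \<in> {..<n} \<and> key q < key p}"
  have slo: "strict_linear_order_on {..<n} r" unfolding r_def by (rule slo_of_inj[OF keyinj])
  have rsub: "r \<subseteq> {..<n} \<times> {..<n}" by (auto simp: r_def)
  note R = rk_props[OF finite_lessThan rsub slo]
  show ?thesis
  proof (intro exI conjI allI impI ballI)
    show "bij_betw (rk r) {..<n} {..<n}" using R(2,3) by (simp add: bij_betw_def)
    fix i j assume ij: "i < n" "j \<in> P i"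
    have jn: "j < n" using ij assms(1) by blast
    have "key j < key i" using keylt ij by blast
    then have "(i, j) \<in> r" using ij jn unfolding r_def by blast
    then show "rk r j < rk r i" using R(1)[of i j] ij jn by blast
  qed
qed


lemma sem:
  fixes n m i :: nat and N :: cpnet and a b :: "nat \<Rightarrow> nat"
  assumes comp: "complete_cpnet n m N" and acyc: "acyclic_cpnet n N"
    and a: "a \<in> outcomes n m" and b: "b \<in> outcomes n m" and i: "i < n" and ab: "a i \<noteq> b i"
    and same: "\<forall>l. l \<noteq> i \<longrightarrow> a l = b l"
  shows "cp_succ n m N a b \<longleftrightarrow> (a i, b i) \<in> snd N i (restrict a (fst N i))"
proof -
  have Pa: "\<forall>j<n. fst N j \<subseteq> {..<n} - {j}" using complete_cpnetD(1)[OF comp] by blast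
  obtain \<pi> where pib: "bij_betw \<pi> {..<n} {..<n}" and pilt: "\<forall>j<n. \<forall>l\<in>fst N j. \<pi> l < \<pi> j"
    using topo[OF Pa] acyc unfolding acyclic_cpnet_def by blast
  have piinj: "inj_on \<pi> {..<n}" using pib by (rule bij_betw_imp_inj_on)
  have row: "strict_linear_order_on {..<m} (snd N j (restrict o1 (fst N j)))"
    if "o1 \<in> outcomes n m" "j < n" for o1 j
  proof -
    have "fst N j \<subseteq> {..<n}" using Pa that(2) by blast
    then have "restrict o1 (fst N j) \<in> assignments (fst N j) m" using rest_assign that(1) by blast
    then show ?thesis using complete_cpnetD(2)[OF comp that(2)] by blast
  qed
  have irr: "(x, x) \<notin> snd N j (restrict o1 (fst N j))" if "o1 \<in> outcomes n m" "j < n" for o1 j x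
    using row[OF that] by (auto simp: strict_linear_order_on_def irrefl_def)
  have tra: "trans (snd N j (restrict o1 (fst N j)))" if "o1 \<in> outcomes n m" "j < n" for o1 j
    using row[OF that] by (auto simp: strict_linear_order_on_def)
  define R where "R = {(o1, o2). o1 \<in> outcomes n m \<and> o2 \<in> outcomes n m \<and> (\<exists>j<n. o1 j \<noteq> o2 j \<and> (\<forall>l<n. \<pi> l < \<pi> j \<longrightarrow> o1 l = o2 l) \<and> (o2 j, o1 j) \<in> snd N j (restrict o1 (fst N j)))}"
  have flipR: "improving_flip n m N \<subseteq> R"
  proof
    fix x assume "x \<in> improving_flip n m N"
    then obtain o1 o2 j where x: "x = (o1, o2)" "o1 \<in> outcomes n m" "o2 \<in> outcomes n m" "j < n"
      "\<forall>l. l \<noteq> j \<longrightarrow> o2 l = o1 l" "(o2 j, o1 j) \<in> snd N j (restrict o1 (fst N j))"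
      unfolding improving_flip_def by blast
    have "o1 j \<noteq> o2 j" using x(6) irr[OF x(2) x(4)] by metis
    moreover have "\<forall>l<n. \<pi> l < \<pi> j \<longrightarrow> o1 l = o2 l" using x(5) by auto
    ultimately show "x \<in> R" using x unfolding R_def by blast
  qed
  have ctx: "restrict o1 (fst N j) = restrict o2 (fst N j)"
    if "j < n" "\<forall>l<n. \<pi> l < \<pi> j \<longrightarrow> o1 l = o2 l" for j o1 o2
  proof (rule restrict_ext)
    fix l assume "l \<in> fst N j"
    then show "o1 l = o2 l" using that pilt Pa by blast
  qed
  have trR: "trans R"
  proof (rule transI)
    fix o1 o2 o3 assume "(o1, o2) \<in> R" "(o2, o3) \<in> R"
    then obtain i1 i2 where o: "o1 \<in> outcomes n m" "o2 \<in> outcomes n m" "o3 \<in> outcomes n m"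
      and i1: "i1 < n" "o1 i1 \<noteq> o2 i1" "\<forall>l<n. \<pi> l < \<pi> i1 \<longrightarrow> o1 l = o2 l" "(o2 i1, o1 i1) \<in> snd N i1 (restrict o1 (fst N i1))"
      and i2: "i2 < n" "o2 i2 \<noteq> o3 i2" "\<forall>l<n. \<pi> l < \<pi> i2 \<longrightarrow> o2 l = o3 l" "(o3 i2, o2 i2) \<in> snd N i2 (restrict o2 (fst N i2))"
      unfolding R_def by blast
    consider "\<pi> i1 < \<pi> i2" | "\<pi> i2 < \<pi> i1" | "i1 = i2"
      using piinj i1(1) i2(1) by (metis inj_onD lessThan_iff linorder_neqE_nat)
    then show "(o1, o3) \<in> R"
    proof cases
      case 1
      have "o3 i1 = o2 i1" using i2(3) i1(1) 1 by auto
      moreover have "\<forall>l<n. \<pi> l < \<pi> i1 \<longrightarrow> o1 l = o3 l" using i1(3) i2(3) 1 by auto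
      ultimately show ?thesis using o i1 unfolding R_def by auto
    next
      case 2
      have "o1 i2 = o2 i2" using i1(3) i2(1) 2 by auto
      moreover have "\<forall>l<n. \<pi> l < \<pi> i2 \<longrightarrow> o1 l = o3 l" using i1(3) i2(3) 2 by fastforce
      moreover have "\<forall>l<n. \<pi> l < \<pi> i2 \<longrightarrow> o1 l = o2 l" using i1(3) 2 by fastforce
      then have "restrict o1 (fst N i2) = restrict o2 (fst N i2)" using ctx[OF i2(1)] by blast
      ultimately show ?thesis using o i2 unfolding R_def by auto
    next
      case 3
      have c: "restrict o1 (fst N i1) = restrict o2 (fst N i1)" using ctx[OF i1(1) i1(3)] .
      have t: "(o3 i1, o1 i1) \<in> snd N i1 (restrict o1 (fst N i1))"
        using tra[OF o(1) i1(1)] i1(4) i2(4) c 3 by (metis transD)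
      moreover have "o3 i1 \<noteq> o1 i1" using t irr[OF o(1) i1(1)] by metis
      moreover have "\<forall>l<n. \<pi> l < \<pi> i1 \<longrightarrow> o1 l = o3 l" using i1(3) i2(3) 3 by auto
      ultimately show ?thesis using o i1 unfolding R_def by auto
    qed
  qed
  have rab: "restrict b (fst N i) = restrict a (fst N i)"
  proof (rule restrict_ext)
    fix l assume "l \<in> fst N i"
    then have "l \<noteq> i" using Pa i by blast
    then show "b l = a l" using same by metis
  qed
  show ?thesis
  proof
    assume "cp_succ n m N a b"
    then have "(b, a) \<in> R\<^sup>+" unfolding cp_succ_def using trancl_mono flipR by blast
    then have "(b, a) \<in> R" using trR by (simp add: trancl_id)
    then obtain j where j: "j < n" "b j \<noteq> a j" "(a j, b j) \<in> snd N j (restrict b (fst N j))"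
      unfolding R_def by blast
    have "j = i" using j same by metis
    then show "(a i, b i) \<in> snd N i (restrict a (fst N i))" using j rab by simp
  next
    assume h: "(a i, b i) \<in> snd N i (restrict a (fst N i))"
    have "(b, a) \<in> improving_flip n m N" using h a b i same rab unfolding improving_flip_def by auto
    then show "cp_succ n m N a b" unfolding cp_succ_def by auto
  qed
qed

lemma mem_concept:
  fixes n m i :: nat and N :: cpnet and a b :: "nat \<Rightarrow> nat"
  assumes comp: "complete_cpnet n m N" and acyc: "acyclic_cpnet n N"
    and XS: "X \<subseteq> swaps n m" and x: "(a, b) \<in> X" and i: "i < n" and ab: "a i \<noteq> b i"
    and same: "\<forall>l. l \<noteq> i \<longrightarrow> a l = b l"
  shows "(a, b) \<in> cp_concept n m X N \<longleftrightarrow> (a i, b i) \<in> snd N i (restrict a (fst N i))"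
proof -
  have "(a, b) \<in> swaps n m" using XS x by blast
  then have "a \<in> outcomes n m" "b \<in> outcomes n m" using swapsD by blast+
  then show ?thesis using sem[OF comp acyc _ _ i ab same] x by (simp add: cp_concept_def)
qed


lemma indep:
  fixes G D :: "nat set" and F :: "(nat \<Rightarrow> nat) \<Rightarrow> 'r" and m :: nat
  assumes fin: "finite G"
    and D: "D = {j \<in> G. \<exists>\<delta>\<in>assignments G m. \<exists>\<delta>'\<in>assignments G m. (\<forall>l\<in>G - {j}. \<delta> l = \<delta>' l) \<and> F \<delta> \<noteq> F \<delta>'}"
  shows "\<delta> \<in> assignments G m \<Longrightarrow> \<delta>' \<in> assignments G m \<Longrightarrow> \<forall>l\<in>D. \<delta> l = \<delta>' l \<Longrightarrow> F \<delta> = F \<delta>'"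
proof (induction "card {l \<in> G. \<delta> l \<noteq> \<delta>' l}" arbitrary: \<delta> rule: less_induct)
  case (less \<delta>)
  show ?case
  proof (cases "{l \<in> G. \<delta> l \<noteq> \<delta>' l} = {}")
    case True
    have "\<delta> = \<delta>'"
    proof (rule ext)
      fix l show "\<delta> l = \<delta>' l"
        by (cases "l \<in> G") (use True less.prems in \<open>auto simp: assignments_def PiE_def extensional_def\<close>)
    qed
    then show ?thesis by simp
  next
    case False
    then obtain l where l: "l \<in> G" "\<delta> l \<noteq> \<delta>' l" by blast
    then have lD: "l \<notin> D" using less.prems(3) by blast
    define \<delta>1 where "\<delta>1 = \<delta>(l := \<delta>' l)"
    have d1: "\<delta>1 \<in> assignments G m" using less.prems(1,2) l(1)
      by (auto simp: \<delta>1_def assignments_def PiE_def extensional_def)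
    have "F \<delta> = F \<delta>1"
    proof (rule ccontr)
      assume "F \<delta> \<noteq> F \<delta>1"
      moreover have "\<forall>l'\<in>G - {l}. \<delta> l' = \<delta>1 l'" by (simp add: \<delta>1_def)
      ultimately have "l \<in> D" using l(1) less.prems(1) d1 unfolding D by blast
      then show False using lD by blast
    qed
    also have "F \<delta>1 = F \<delta>'"
    proof (rule less.hyps)
      have "{l' \<in> G. \<delta>1 l' \<noteq> \<delta>' l'} \<subset> {l' \<in> G. \<delta> l' \<noteq> \<delta>' l'}" using l by (auto simp: \<delta>1_def)
      moreover have "finite {l' \<in> G. \<delta> l' \<noteq> \<delta>' l'}" using fin by simp
      ultimately show "card {l' \<in> G. \<delta>1 l' \<noteq> \<delta>' l'} < card {l \<in> G. \<delta> l \<noteq> \<delta>' l}"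
        by (simp add: psubset_card_mono)
      show "\<delta>1 \<in> assignments G m" by (rule d1)
      show "\<delta>' \<in> assignments G m" by (rule less.prems(2))
      show "\<forall>l\<in>D. \<delta>1 l = \<delta>' l" using less.prems(3) lD by (auto simp: \<delta>1_def)
    qed
    finally show ?thesis .
  qed
qed

lemma dummy_removal:
  fixes n m k :: nat and G :: "nat \<Rightarrow> nat set" and f :: "nat \<Rightarrow> (nat \<Rightarrow> nat) \<Rightarrow> nat rel"
  assumes m: "m \<ge> 1" and G: "\<forall>i<n. G i \<subseteq> {..<n} - {i}" and Gac: "acyclic {(j, i). i < n \<and> j \<in> G i}"
    and Gk: "\<forall>i<n. card (G i) \<le> k"
    and f: "\<forall>i<n. \<forall>\<delta>\<in>assignments (G i) m. f i \<delta> \<subseteq> {..<m} \<times> {..<m} \<and> strict_linear_order_on {..<m} (f i \<delta>)"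
  shows "\<exists>N. valid n m k N \<and> (\<forall>i<n. \<forall>a\<in>outcomes n m. snd N i (restrict a (fst N i)) = f i (restrict a (G i)))"
proof -
  define D where "D i = {j \<in> G i. \<exists>\<delta>\<in>assignments (G i) m. \<exists>\<delta>'\<in>assignments (G i) m. (\<forall>l\<in>G i - {j}. \<delta> l = \<delta>' l) \<and> f i \<delta> \<noteq> f i \<delta>'}" for i
  define ext where "ext i \<epsilon> = (\<lambda>l. if l \<in> D i then \<epsilon> l else if l \<in> G i then 0 else undefined)" for i and \<epsilon> :: "nat \<Rightarrow> nat"
  define N :: cpnet where "N = (D, \<lambda>i \<epsilon>. f i (ext i \<epsilon>))"
  have DG: "D i \<subseteq> G i" for i by (auto simp: D_def)
  have finG: "finite (G i)" if "i < n" for i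
  proof -
    have "G i \<subseteq> {..<n}" using G that by blast
    then show ?thesis using finite_subset by blast
  qed
  have ind: "f i \<delta> = f i \<delta>'" if "i < n" "\<delta> \<in> assignments (G i) m" "\<delta>' \<in> assignments (G i) m" "\<forall>l\<in>D i. \<delta> l = \<delta>' l" for i \<delta> \<delta>'
    using indep[where G="G i" and D="D i" and F="f i" and m=m, OF finG[OF that(1)] D_def[of i]] that(2-4) by blast
  have extA: "ext i \<epsilon> \<in> assignments (G i) m" if "\<epsilon> \<in> assignments (D i) m" for i \<epsilon>
    using that DG m by (auto simp: ext_def assignments_def PiE_def extensional_def)
  have c1: "\<forall>i<n. D i \<subseteq> {..<n} - {i}" using DG G by blast
  have c2: "\<forall>i<n. \<forall>\<gamma>\<in>assignments (D i) m. f i (ext i \<gamma>) \<subseteq> {..<m} \<times> {..<m} \<and> strict_linear_order_on {..<m} (f i (ext i \<gamma>))"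
    using f extA by blast
  have c3: "\<forall>i<n. \<forall>j\<in>D i. \<exists>\<gamma>\<in>assignments (D i) m. \<exists>\<gamma>'\<in>assignments (D i) m. (\<forall>l\<in>D i - {j}. \<gamma> l = \<gamma>' l) \<and> f i (ext i \<gamma>) \<noteq> f i (ext i \<gamma>')"
  proof (intro allI impI ballI)
    fix i j assume i: "i < n" and j: "j \<in> D i"
    then obtain \<delta> \<delta>' where d: "\<delta> \<in> assignments (G i) m" "\<delta>' \<in> assignments (G i) m"
      "\<forall>l\<in>G i - {j}. \<delta> l = \<delta>' l" "f i \<delta> \<noteq> f i \<delta>'"
      unfolding D_def by blast
    have ra: "restrict \<delta> (D i) \<in> assignments (D i) m" "restrict \<delta>' (D i) \<in> assignments (D i) m"
      using d(1,2) DG by (auto simp: assignments_def PiE_def)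
    have e1: "f i (ext i (restrict \<delta> (D i))) = f i \<delta>"
      by (rule ind[OF i extA[OF ra(1)] d(1)]) (simp add: ext_def)
    have e2: "f i (ext i (restrict \<delta>' (D i))) = f i \<delta>'"
      by (rule ind[OF i extA[OF ra(2)] d(2)]) (simp add: ext_def)
    have "\<forall>l\<in>D i - {j}. restrict \<delta> (D i) l = restrict \<delta>' (D i) l" using d(3) DG by auto
    then show "\<exists>\<gamma>\<in>assignments (D i) m. \<exists>\<gamma>'\<in>assignments (D i) m. (\<forall>l\<in>D i - {j}. \<gamma> l = \<gamma>' l) \<and> f i (ext i \<gamma>) \<noteq> f i (ext i \<gamma>')"
      using ra e1 e2 d(4) by metis
  qed
  have comp: "complete_cpnet n m N" unfolding complete_cpnet_def Let_def N_def using c1 c2 c3 by simp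
  have acyc: "acyclic_cpnet n N" unfolding acyclic_cpnet_def N_def
    by (rule acyclic_subset[OF Gac]) (use DG in auto)
  have kb: "k_bounded_cpnet n k N" unfolding k_bounded_cpnet_def N_def fst_conv
    using Gk card_mono[OF finG DG] by (meson le_trans)
  have rows: "snd N i (restrict a (fst N i)) = f i (restrict a (G i))" if "i < n" "a \<in> outcomes n m" for i a
  proof -
    have Dn: "D i \<subseteq> {..<n}" "G i \<subseteq> {..<n}" using c1 G that(1) by blast+
    have "f i (ext i (restrict a (D i))) = f i (restrict a (G i))"
      by (rule ind[OF that(1) extA[OF rest_assign[OF that(2) Dn(1)]] rest_assign[OF that(2) Dn(2)]])
        (use DG in \<open>auto simp: ext_def\<close>)
    then show ?thesis by (simp add: N_def)
  qed
  show ?thesis using comp acyc kb rows unfolding valid_def by blast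
qed

lemma graph_bounds:
  fixes n k m :: nat and P :: "nat \<Rightarrow> nat set"
  assumes P: "\<forall>i<n. P i \<subseteq> {..<n} - {i}" and ac: "acyclic {(j, i). i < n \<and> j \<in> P i}"
    and Pk: "\<forall>i<n. card (P i) \<le> k" and m: "m \<ge> 1"
  shows "(\<Sum>i<n. m ^ card (P i)) \<le> (\<Sum>p<n. m ^ min p k)"
    and "\<exists>G. (\<forall>i<n. P i \<subseteq> G i \<and> G i \<subseteq> {..<n} - {i} \<and> card (G i) \<le> k) \<and> acyclic {(j, i). i < n \<and> j \<in> G i}
          \<and> (\<Sum>i<n. m ^ card (G i)) = (\<Sum>p<n. m ^ min p k)"
proof -
  obtain \<pi> where pib: "bij_betw \<pi> {..<n} {..<n}" and pilt: "\<forall>i<n. \<forall>j\<in>P i. \<pi> j < \<pi> i"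
    using topo[OF P ac] by blast
  define E where "E i = {j. j < n \<and> \<pi> j < \<pi> i}" for i
  have cardE: "card (E i) = \<pi> i" if "i < n" for i
  proof -
    have "\<pi> ` E i = {..<\<pi> i}"
    proof
      show "\<pi> ` E i \<subseteq> {..<\<pi> i}" by (auto simp: E_def)
      show "{..<\<pi> i} \<subseteq> \<pi> ` E i"
      proof
        fix p assume p: "p \<in> {..<\<pi> i}"
        have "\<pi> i < n" using pib that by (auto simp: bij_betw_def)
        then have "p \<in> \<pi> ` {..<n}" using pib p by (auto simp: bij_betw_def)
        then show "p \<in> \<pi> ` E i" using p by (auto simp: E_def)
      qed
    qed
    moreover have "E i \<subseteq> {..<n}" by (auto simp: E_def)
    then have "inj_on \<pi> (E i)"
      using inj_on_subset[OF bij_betw_imp_inj_on[OF pib]] by blast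
    ultimately show ?thesis using card_image by fastforce
  qed
  have PE: "P i \<subseteq> E i" if "i < n" for i using P pilt that by (auto simp: E_def)
  have finE: "finite (E i)" for i by (auto simp: E_def)
  have cP: "card (P i) \<le> min (\<pi> i) k" if "i < n" for i
    using card_mono[OF finE PE[OF that]] cardE[OF that] Pk that by auto
  have reidx: "(\<Sum>i<n. m ^ min (\<pi> i) k) = (\<Sum>p<n. m ^ min p k)"
    using sum.reindex_bij_betw[OF pib, of "\<lambda>p. m ^ min p k"] by simp
  show "(\<Sum>i<n. m ^ card (P i)) \<le> (\<Sum>p<n. m ^ min p k)"
  proof -
    have "(\<Sum>i<n. m ^ card (P i)) \<le> (\<Sum>i<n. m ^ min (\<pi> i) k)"
      by (rule sum_mono) (use cP m in \<open>auto intro: power_increasing\<close>)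
    then show ?thesis using reidx by simp
  qed
  have "\<forall>i. \<exists>C. i < n \<longrightarrow> P i \<subseteq> C \<and> C \<subseteq> E i \<and> card C = min (\<pi> i) k"
  proof
    fix i show "\<exists>C. i < n \<longrightarrow> P i \<subseteq> C \<and> C \<subseteq> E i \<and> card C = min (\<pi> i) k"
    proof (cases "i < n")
      case False then show ?thesis by blast
    next
      case True
      have fP: "finite (P i)" using finite_subset[OF PE[OF True] finE] .
      have "min (\<pi> i) k - card (P i) \<le> card (E i - P i)"
        using card_Diff_subset[OF fP PE[OF True]] cardE[OF True] by simp
      then obtain T where T: "T \<subseteq> E i - P i" "card T = min (\<pi> i) k - card (P i)" "finite T"
        by (rule obtain_subset_with_card_n)
      have "card (P i \<union> T) = card (P i) + card T" using T fP by (intro card_Un_disjoint) auto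
      then have "card (P i \<union> T) = min (\<pi> i) k" using T(2) cP[OF True] by simp
      then show ?thesis using T(1) PE[OF True] by (intro exI[of _ "P i \<union> T"]) auto
    qed
  qed
  from choice[OF this] obtain G where G: "\<And>i. i < n \<Longrightarrow> P i \<subseteq> G i \<and> G i \<subseteq> E i \<and> card (G i) = min (\<pi> i) k"
    by blast
  have G1: "\<forall>i<n. P i \<subseteq> G i \<and> G i \<subseteq> {..<n} - {i} \<and> card (G i) \<le> k"
    using G by (fastforce simp: E_def)
  have "{(j, i). i < n \<and> j \<in> G i} \<subseteq> inv_image less_than \<pi>"
  proof (clarsimp)
    fix a b assume ab: "b < n" "a \<in> G b"
    then show "\<pi> a < \<pi> b" using G[OF ab(1)] by (auto simp: E_def)
  qed
  then have G2: "acyclic {(j, i). i < n \<and> j \<in> G i}"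
    by (rule acyclic_subset[OF wf_acyclic[OF wf_inv_image[OF wf_less_than]]])
  have "(\<Sum>i<n. m ^ card (G i)) = (\<Sum>i<n. m ^ min (\<pi> i) k)"
    by (rule sum.cong) (use G in auto)
  then have G3: "(\<Sum>i<n. m ^ card (G i)) = (\<Sum>p<n. m ^ min p k)" using reidx by simp
  show "\<exists>G. (\<forall>i<n. P i \<subseteq> G i \<and> G i \<subseteq> {..<n} - {i} \<and> card (G i) \<le> k) \<and> acyclic {(j, i). i < n \<and> j \<in> G i}
          \<and> (\<Sum>i<n. m ^ card (G i)) = (\<Sum>p<n. m ^ min p k)"
    using G1 G2 G3 by blast
qed

lemma geo_nat:
  fixes m k :: nat
  assumes "m \<ge> 1"
  shows "(m - 1) * (\<Sum>p<k. m ^ p) = m ^ k - 1"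
proof -
  obtain m' where m': "m = Suc m'" using assms by (cases m) auto
  have "m' * (\<Sum>p<k. Suc m' ^ p) + 1 = Suc m' ^ k"
    by (induction k) (simp_all add: algebra_simps)
  then show ?thesis using m' by simp
qed

lemma Mk_sum:
  fixes n m k :: nat
  assumes m: "m \<ge> 2" and kn: "k \<le> n"
  shows "(\<Sum>p<n. m ^ min p k) = M_k n m k"
    and "(m - 1) * M_k n m k = (m - 1) * (n - k) * m ^ k + m ^ k - 1"
proof -
  have split: "{..<n} = {..<k} \<union> {k..<n}" using kn by auto
  have "(\<Sum>p<n. m ^ min p k) = (\<Sum>p<k. m ^ min p k) + (\<Sum>p\<in>{k..<n}. m ^ min p k)"
    unfolding split by (rule sum.union_disjoint) auto
  also have "(\<Sum>p<k. m ^ min p k) = (\<Sum>p<k. m ^ p)" by (rule sum.cong) auto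
  also have "(\<Sum>p\<in>{k..<n}. m ^ min p k) = (n - k) * m ^ k" by simp
  finally have s: "(\<Sum>p<n. m ^ min p k) = (\<Sum>p<k. m ^ p) + (n - k) * m ^ k" .
  have g: "(m - 1) * (\<Sum>p<k. m ^ p) = m ^ k - 1" using geo_nat m by simp
  have "(m ^ k - 1) div (m - 1) = (\<Sum>p<k. m ^ p)" unfolding g[symmetric] using m by simp
  then show "(\<Sum>p<n. m ^ min p k) = M_k n m k" using s by (simp add: M_k_def)
  have "m ^ k \<ge> 1" using m by simp
  have "(m - 1) * M_k n m k = (m - 1) * ((n - k) * m ^ k) + (m - 1) * (\<Sum>p<k. m ^ p)"
    unfolding M_k_def \<open>(m ^ k - 1) div (m - 1) = _\<close> by (rule distrib_left)
  also have "\<dots> = (m - 1) * (n - k) * m ^ k + (m ^ k - 1)" unfolding g by (simp only: mult.assoc)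
  finally show "(m - 1) * M_k n m k = (m - 1) * (n - k) * m ^ k + m ^ k - 1"
    using \<open>m ^ k \<ge> 1\<close> by linarith
qed


definition sw :: "nat \<Rightarrow> nat \<Rightarrow> nat" where
  "sw t z = (if z = t then Suc t else if z = Suc t then t else z)"

lemma sw_inv: "sw t (sw t z) = z"
  by (simp add: sw_def)

lemma sig_order:
  fixes t x y :: nat
  assumes "x \<noteq> y"
  shows "sw t y < sw t x \<longleftrightarrow> (if (x = t \<and> y = Suc t) \<or> (x = Suc t \<and> y = t) then x < y else y < x)"
  using assms by (auto simp: sw_def)

lemma outcome_lt: "a \<in> outcomes n m \<Longrightarrow> i < n \<Longrightarrow> a i < m"
  by (auto simp: outcomes_def PiE_def)

lemma card_assignments: "finite Y \<Longrightarrow> card (assignments Y m) = m ^ card Y"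
  by (simp add: assignments_def card_PiE)

lemma finite_assignments: "finite Y \<Longrightarrow> finite (assignments Y m)"
  by (simp add: assignments_def finite_PiE)

lemma lower_TD:
  fixes n m k :: nat and X :: "((nat \<Rightarrow> nat) \<times> (nat \<Rightarrow> nat)) set" and N :: cpnet and S
  assumes m: "m \<ge> 2" and XS: "is_swap_instance_space n m X"
    and N: "valid n m k N" and S: "teaching_set X (C_ac n m k X) (cp_concept n m X N) S"
  shows "(m - 1) * (\<Sum>p<n. m ^ min p k) \<le> card S"
proof -
  have XS1: "X \<subseteq> swaps n m" and XS2: "\<And>a b. (a, b) \<in> swaps n m \<Longrightarrow> (a, b) \<in> X \<longleftrightarrow> (b, a) \<notin> X"
    using XS unfolding is_swap_instance_space_def by blast+
  have comp: "complete_cpnet n m N" and acyc: "acyclic_cpnet n N" and kb: "k_bounded_cpnet n k N"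
    using N unfolding valid_def by blast+
  have m1: "m \<ge> 1" using m by simp
  have Pa: "\<forall>i<n. fst N i \<subseteq> {..<n} - {i}" using complete_cpnetD(1)[OF comp] by blast
  obtain G where G: "\<forall>i<n. fst N i \<subseteq> G i \<and> G i \<subseteq> {..<n} - {i} \<and> card (G i) \<le> k"
    and Gac: "acyclic {(j, i). i < n \<and> j \<in> G i}" and Gsum: "(\<Sum>i<n. m ^ card (G i)) = (\<Sum>p<n. m ^ min p k)"
    using graph_bounds(2)[OF Pa acyc[unfolded acyclic_cpnet_def] kb[unfolded k_bounded_cpnet_def] m1] by blast
  have G1: "\<forall>i<n. G i \<subseteq> {..<n} - {i}" and Gk: "\<forall>i<n. card (G i) \<le> k" using G by blast+
  have finG: "finite (G i)" if "i < n" for i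
  proof -
    have "G i \<subseteq> {..<n}" using G1 that by blast
    then show ?thesis using finite_subset by blast
  qed
  define f where "f i \<delta> = snd N i (restrict \<delta> (fst N i))" for i and \<delta> :: "nat \<Rightarrow> nat"
  have frow: "f i \<delta> \<subseteq> {..<m} \<times> {..<m} \<and> strict_linear_order_on {..<m} (f i \<delta>)"
    if "i < n" "\<delta> \<in> assignments (G i) m" for i \<delta>
  proof -
    have "restrict \<delta> (fst N i) \<in> assignments (fst N i) m" using that G by (auto simp: assignments_def PiE_def)
    then show ?thesis unfolding f_def using complete_cpnetD(2)[OF comp that(1)] by blast
  qed
  have memc: "(a, b) \<in> cp_concept n m X N \<longleftrightarrow> (a i, b i) \<in> f i (restrict a (G i))"
    if "(a, b) \<in> X" "i < n" "a i \<noteq> b i" "\<forall>l. l \<noteq> i \<longrightarrow> a l = b l" for a b i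
  proof -
    have "G i \<inter> fst N i = fst N i" using G that(2) by blast
    then have "restrict (restrict a (G i)) (fst N i) = restrict a (fst N i)" by simp
    then show ?thesis using mem_concept[OF comp acyc XS1 that] by (simp add: f_def)
  qed
  define blk where "blk i \<gamma> t = {(a, b) \<in> X. a i \<noteq> b i \<and> (\<forall>l. l \<noteq> i \<longrightarrow> a l = b l) \<and> restrict a (G i) = \<gamma>
      \<and> ((rk (f i \<gamma>) (a i) = t \<and> rk (f i \<gamma>) (b i) = Suc t) \<or> (rk (f i \<gamma>) (a i) = Suc t \<and> rk (f i \<gamma>) (b i) = t))}"
    for i \<gamma> t
  have hit: "S \<inter> blk i \<gamma> t \<noteq> {}" if it: "i < n" "\<gamma> \<in> assignments (G i) m" "t < m - 1" for i \<gamma> t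
  proof
    assume empty: "S \<inter> blk i \<gamma> t = {}"
    define r where "r = f i \<gamma>"
    have r: "r \<subseteq> {..<m} \<times> {..<m}" "strict_linear_order_on {..<m} r" using frow[OF it(1,2)] by (auto simp: r_def)
    note RK = rk_props[OF finite_lessThan r]
    have RK3: "rk r ` {..<m} = {..<m}" using RK(3) by simp
    define g where "g z = sw t (rk r z)" for z
    have ginj: "inj_on g {..<m}"
      using RK(2) unfolding g_def inj_on_def by (metis sw_inv)
    define r' where "r' = {(p, q). p \<in> {..<m} \<and> q \<in> {..<m} \<and> g q < g p}"
    have r': "r' \<subseteq> {..<m} \<times> {..<m}" "strict_linear_order_on {..<m} r'"
      using slo_of_inj[OF ginj] by (auto simp: r'_def)
    define f' where "f' i' \<delta> = (if i' = i \<and> \<delta> = \<gamma> then r' else f i' \<delta>)" for i' \<delta>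
    have f'row: "\<forall>i'<n. \<forall>\<delta>\<in>assignments (G i') m. f' i' \<delta> \<subseteq> {..<m} \<times> {..<m} \<and> strict_linear_order_on {..<m} (f' i' \<delta>)"
      using frow r' by (auto simp: f'_def)
    obtain N' where N': "valid n m k N'"
      and rows': "\<forall>i'<n. \<forall>a\<in>outcomes n m. snd N' i' (restrict a (fst N' i')) = f' i' (restrict a (G i'))"
      using dummy_removal[OF m1 G1 Gac Gk f'row] by blast
    have comp': "complete_cpnet n m N'" and acyc': "acyclic_cpnet n N'" using N' unfolding valid_def by blast+
    have memc': "(a, b) \<in> cp_concept n m X N' \<longleftrightarrow> (a i', b i') \<in> f' i' (restrict a (G i'))"
      if "(a, b) \<in> X" "i' < n" "a i' \<noteq> b i'" "\<forall>l. l \<noteq> i' \<longrightarrow> a l = b l" for a b i'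
    proof -
      have "a \<in> outcomes n m" using that(1) XS1 swapsD by blast
      then show ?thesis using mem_concept[OF comp' acyc' XS1 that] rows' that(2) by simp
    qed
    have core: "((a, b) \<in> cp_concept n m X N' \<longleftrightarrow> (a, b) \<in> cp_concept n m X N) \<longleftrightarrow>
        \<not> ((rk r (a i) = t \<and> rk r (b i) = Suc t) \<or> (rk r (a i) = Suc t \<and> rk r (b i) = t))"
      if "(a, b) \<in> X" "a i \<noteq> b i" "\<forall>l. l \<noteq> i \<longrightarrow> a l = b l" "restrict a (G i) = \<gamma>" for a b
    proof -
      have sab: "(a, b) \<in> swaps n m" using that(1) XS1 by blast
      have lt: "a i < m" "b i < m" using swapsD(1,2)[OF sab] outcome_lt it(1) by blast+
      have ne: "rk r (a i) \<noteq> rk r (b i)" using RK(2) lt that(2) by (auto simp: inj_on_def)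
      have e1: "(a, b) \<in> cp_concept n m X N \<longleftrightarrow> rk r (b i) < rk r (a i)"
        using memc[OF that(1) it(1) that(2,3)] that(4) RK(1)[of "a i" "b i"] lt by (simp add: r_def)
      have e2: "(a, b) \<in> cp_concept n m X N' \<longleftrightarrow> sw t (rk r (b i)) < sw t (rk r (a i))"
        using memc'[OF that(1) it(1) that(2,3)] that(4) lt by (simp add: f'_def r'_def g_def)
      show ?thesis using e1 e2 sig_order[OF ne, of t] by auto
    qed
    have agree: "x \<in> cp_concept n m X N' \<longleftrightarrow> x \<in> cp_concept n m X N" if "x \<in> X" "x \<notin> blk i \<gamma> t" for x
    proof -
      obtain a b where x: "x = (a, b)" by (cases x)
      have sab: "(a, b) \<in> swaps n m" using that(1) XS1 x by blast
      obtain i' where i': "i' < n" "a i' \<noteq> b i'" "\<forall>l. l \<noteq> i' \<longrightarrow> a l = b l"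
        using swapsD(3)[OF sab] by blast
      show ?thesis
      proof (cases "i' = i \<and> restrict a (G i) = \<gamma>")
        case False
        then have "f' i' (restrict a (G i')) = f i' (restrict a (G i'))" by (auto simp: f'_def)
        then show ?thesis using memc[OF _ i'] memc'[OF _ i'] that(1) x by simp
      next
        case True
        then have "\<not> ((rk r (a i) = t \<and> rk r (b i) = Suc t) \<or> (rk r (a i) = Suc t \<and> rk r (b i) = t))"
          using that x i' by (auto simp: blk_def r_def)
        then show ?thesis using core[of a b] True that(1) x i' by blast
      qed
    qed
    have "cp_concept n m X N' \<in> C_ac n m k X" using N' unfolding C_ac_def valid_def by blast
    moreover have "\<forall>x\<in>S. x \<in> cp_concept n m X N' \<longleftrightarrow> x \<in> cp_concept n m X N"
      using agree empty S by (auto simp: teaching_set_def)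
    ultimately have eq: "cp_concept n m X N' = cp_concept n m X N"
      using S unfolding teaching_set_def by blast
    have "t \<in> rk r ` {..<m}" "Suc t \<in> rk r ` {..<m}" using RK3 it(3) by auto
    then obtain p q where pq: "p < m" "q < m" "rk r p = t" "rk r q = Suc t" by auto
    define z where "z l = (if l \<in> G i then \<gamma> l else if l < n then 0 else undefined)" for l
    define a where "a = z(i := p)"
    define b where "b = z(i := q)"
    have pnq: "p \<noteq> q" using pq by auto
    have iG: "i \<notin> G i" using G1 it(1) by blast
    have Gn: "G i \<subseteq> {..<n}" using G1 it(1) by blast
    have ao: "a \<in> outcomes n m" "b \<in> outcomes n m"
      using it(1,2) pq(1,2) Gn m1 by (auto simp: a_def b_def z_def outcomes_def assignments_def PiE_def extensional_def)
    have sab: "(a, b) \<in> swaps n m" by (rule swapsI[OF ao it(1)]) (auto simp: a_def b_def pnq)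
    have ra: "restrict a (G i) = \<gamma>" "restrict b (G i) = \<gamma>"
      using it(2) iG by (auto simp: a_def b_def z_def assignments_def PiE_def extensional_def restrict_def)
    have "\<exists>a' b'. (a', b') \<in> X \<and> a' i \<noteq> b' i \<and> (\<forall>l. l \<noteq> i \<longrightarrow> a' l = b' l) \<and> restrict a' (G i) = \<gamma>
        \<and> ((rk r (a' i) = t \<and> rk r (b' i) = Suc t) \<or> (rk r (a' i) = Suc t \<and> rk r (b' i) = t))"
    proof (cases "(a, b) \<in> X")
      case True
      then show ?thesis using ra pq pnq by (intro exI[of _ a] exI[of _ b]) (auto simp: a_def b_def)
    next
      case False
      then have "(b, a) \<in> X" using XS2[OF sab] by blast
      then show ?thesis using ra pq pnq by (intro exI[of _ b] exI[of _ a]) (auto simp: a_def b_def)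
    qed
    then obtain a' b' where ab': "(a', b') \<in> X" "a' i \<noteq> b' i" "\<forall>l. l \<noteq> i \<longrightarrow> a' l = b' l" "restrict a' (G i) = \<gamma>"
        "(rk r (a' i) = t \<and> rk r (b' i) = Suc t) \<or> (rk r (a' i) = Suc t \<and> rk r (b' i) = t)" by blast
    show False using core[OF ab'(1-4)] ab'(5) eq by simp
  qed
  define T where "T = (SIGMA i:{..<n}. assignments (G i) m \<times> {..<m - 1})"
  have "\<forall>\<tau>\<in>T. \<exists>x. x \<in> S \<and> x \<in> blk (fst \<tau>) (fst (snd \<tau>)) (snd (snd \<tau>))"
    using hit by (fastforce simp: T_def)
  then obtain ch where ch: "\<forall>\<tau>\<in>T. ch \<tau> \<in> S \<and> ch \<tau> \<in> blk (fst \<tau>) (fst (snd \<tau>)) (snd (snd \<tau>))"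
    by metis
  have disj: "(i, \<gamma>, t) = (i', \<gamma>', t')" if "x \<in> blk i \<gamma> t" "x \<in> blk i' \<gamma>' t'" for x i \<gamma> t i' \<gamma>' t'
  proof -
    obtain a b where x: "x = (a, b)" by (cases x)
    have A: "a i \<noteq> b i" "\<forall>l. l \<noteq> i \<longrightarrow> a l = b l" "restrict a (G i) = \<gamma>"
      "(rk (f i \<gamma>) (a i) = t \<and> rk (f i \<gamma>) (b i) = Suc t) \<or> (rk (f i \<gamma>) (a i) = Suc t \<and> rk (f i \<gamma>) (b i) = t)"
      using that(1) x by (auto simp: blk_def)
    have B: "a i' \<noteq> b i'" "\<forall>l. l \<noteq> i' \<longrightarrow> a l = b l" "restrict a (G i') = \<gamma>'"
      "(rk (f i' \<gamma>') (a i') = t' \<and> rk (f i' \<gamma>') (b i') = Suc t') \<or> (rk (f i' \<gamma>') (a i') = Suc t' \<and> rk (f i' \<gamma>') (b i') = t')"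
      using that(2) x by (auto simp: blk_def)
    have ii: "i' = i" using A(2) B(1) by metis
    then have gg: "\<gamma>' = \<gamma>" using A(3) B(3) by simp
    have "t' = t" using A(4) B(4) ii gg by auto
    then show ?thesis using ii gg by simp
  qed
  have inj: "inj_on ch T"
  proof (rule inj_onI)
    fix \<tau> \<tau>' assume "\<tau> \<in> T" "\<tau>' \<in> T" "ch \<tau> = ch \<tau>'"
    then have "ch \<tau> \<in> blk (fst \<tau>) (fst (snd \<tau>)) (snd (snd \<tau>))" "ch \<tau> \<in> blk (fst \<tau>') (fst (snd \<tau>')) (snd (snd \<tau>'))"
      using ch by metis+
    then have "(fst \<tau>, fst (snd \<tau>), snd (snd \<tau>)) = (fst \<tau>', fst (snd \<tau>'), snd (snd \<tau>'))" by (rule disj)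
    then show "\<tau> = \<tau>'" by (simp add: prod_eq_iff)
  qed
  have finS: "finite S" using S by (simp add: teaching_set_def)
  have "card T \<le> card S" using card_inj_on_le[OF inj _ finS] ch by blast
  moreover have "card T = (\<Sum>i<n. m ^ card (G i) * (m - 1))"
  proof -
    have "card T = (\<Sum>i<n. card (assignments (G i) m \<times> {..<m - 1}))"
      unfolding T_def by (rule card_SigmaI) (auto intro: finite_assignments finG)
    also have "\<dots> = (\<Sum>i<n. m ^ card (G i) * (m - 1))"
      by (rule sum.cong) (auto simp: card_cartesian_product card_assignments finG)
    finally show ?thesis .
  qed
  moreover have "(\<Sum>i<n. m ^ card (G i) * (m - 1)) = (m - 1) * (\<Sum>p<n. m ^ min p k)"
    unfolding Gsum[symmetric] by (simp add: sum_distrib_left mult.commute)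
  ultimately show ?thesis by simp
qed


lemma zext:
  fixes Y :: "nat set" and \<gamma> :: "nat \<Rightarrow> nat" and n m :: nat
  assumes Y: "Y \<subseteq> {..<n}" and g: "\<gamma> \<in> assignments Y m" and m: "m \<ge> 1"
  shows "(\<lambda>l. if l \<in> Y then \<gamma> l else if l < n then 0 else undefined) \<in> outcomes n m"
    and "restrict (\<lambda>l. if l \<in> Y then \<gamma> l else if l < n then 0 else undefined) Y = \<gamma>"
proof -
  show "(\<lambda>l. if l \<in> Y then \<gamma> l else if l < n then 0 else undefined) \<in> outcomes n m"
    using Y g m by (auto simp: outcomes_def assignments_def PiE_def extensional_def)
  show "restrict (\<lambda>l. if l \<in> Y then \<gamma> l else if l < n then 0 else undefined) Y = \<gamma>"
  proof (rule ext)
    fix l show "restrict (\<lambda>l. if l \<in> Y then \<gamma> l else if l < n then 0 else undefined) Y l = \<gamma> l"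
      using g by (auto simp: assignments_def PiE_def extensional_def)
  qed
qed

lemma restrict_upd_notin: "i \<notin> Y \<Longrightarrow> restrict (f(i := v)) Y = restrict f Y"
  by (auto simp: restrict_def fun_eq_iff)

lemma slo_asym: "strict_linear_order_on A r \<Longrightarrow> (x, y) \<in> r \<Longrightarrow> (y, x) \<notin> r"
  unfolding strict_linear_order_on_def irrefl_def by (metis transD)

lemma least_i:
  fixes i :: nat and a b :: "nat \<Rightarrow> 'b"
  shows "a i \<noteq> b i \<Longrightarrow> \<forall>l. l \<noteq> i \<longrightarrow> a l = b l \<Longrightarrow> (LEAST j. a j \<noteq> b j) = i"
  by (rule Least_equality) (simp, metis order_refl)

lemma outcomes_finite: "finite (outcomes n m)"
  by (simp add: outcomes_def finite_PiE)

lemma upper_TD: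
  fixes n m k :: nat and X :: "((nat \<Rightarrow> nat) \<times> (nat \<Rightarrow> nat)) set" and L
  assumes m: "m \<ge> 2" and XS: "is_swap_instance_space n m X"
    and L: "L \<subseteq> C_ac n m k X" "L \<noteq> {}"
  shows "\<exists>c\<in>L. \<exists>S. teaching_set X L c S \<and> card S \<le> (m - 1) * (\<Sum>p<n. m ^ min p k)"
proof -
  have XS1: "X \<subseteq> swaps n m" and XS2: "\<And>a b. (a, b) \<in> swaps n m \<Longrightarrow> (a, b) \<in> X \<longleftrightarrow> (b, a) \<notin> X"
    using XS unfolding is_swap_instance_space_def by blast+
  have m1: "m \<ge> 1" using m by simp
  have finX: "finite X"
  proof -
    have "X \<subseteq> outcomes n m \<times> outcomes n m" using XS1 by (auto simp: swaps_def)
    then show ?thesis using outcomes_finite finite_subset by blast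
  qed
  define P where "P N \<longleftrightarrow> valid n m k N \<and> cp_concept n m X N \<in> L" for N
  define s where "s N = (\<Sum>i<n. card (fst N i))" for N :: cpnet
  obtain c0 where "c0 \<in> L" using L(2) by blast
  then obtain N0 where "P N0" using L(1) unfolding C_ac_def P_def valid_def by blast
  have bnd: "\<forall>N. P N \<longrightarrow> s N < n * k + 1"
  proof (intro allI impI)
    fix N assume "P N"
    then have "\<forall>i<n. card (fst N i) \<le> k" by (simp add: P_def valid_def k_bounded_cpnet_def)
    then have "s N \<le> (\<Sum>i<n. k)" unfolding s_def by (intro sum_mono) auto
    then show "s N < n * k + 1" by simp
  qed
  obtain N where PN: "P N" and maxN: "\<And>N'. P N' \<Longrightarrow> s N' \<le> s N"
    using Lattices_Big.ex_has_greatest_nat[of P N0 s "n*k+1"] \<open>P N0\<close> bnd by blast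
  have comp: "complete_cpnet n m N" and acyc: "acyclic_cpnet n N" and kb: "k_bounded_cpnet n k N"
    using PN unfolding P_def valid_def by blast+
  define Pa where "Pa = fst N"
  have Pa: "\<forall>i<n. Pa i \<subseteq> {..<n} - {i}" using complete_cpnetD(1)[OF comp] unfolding Pa_def by blast
  define row where "row N' i a = snd N' i (restrict a (fst N' i))" for N' :: cpnet and i and a :: "nat \<Rightarrow> nat"
  have rowslo: "row N' i a \<subseteq> {..<m} \<times> {..<m} \<and> strict_linear_order_on {..<m} (row N' i a)"
    if "complete_cpnet n m N'" "i < n" "a \<in> outcomes n m" for N' i a
  proof -
    have "fst N' i \<subseteq> {..<n}" using complete_cpnetD(1)[OF that(1,2)] by blast
    then have "restrict a (fst N' i) \<in> assignments (fst N' i) m" using rest_assign that(3) by blast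
    then show ?thesis unfolding row_def using complete_cpnetD(2)[OF that(1,2)] by blast
  qed
  have mem: "(a, b) \<in> cp_concept n m X N' \<longleftrightarrow> (a i, b i) \<in> row N' i a"
    if "complete_cpnet n m N'" "acyclic_cpnet n N'" "(a, b) \<in> X" "i < n" "a i \<noteq> b i" "\<forall>l. l \<noteq> i \<longrightarrow> a l = b l"
    for N' a b i
    unfolding row_def using mem_concept[OF that(1,2) XS1 that(3-6)] .
  define S where "S = {(a, b) \<in> X. \<exists>i<n. a i \<noteq> b i \<and> (\<forall>l. l \<noteq> i \<longrightarrow> a l = b l)
      \<and> (\<forall>l<n. l \<notin> Pa i \<and> l \<noteq> i \<longrightarrow> a l = 0)
      \<and> (rk (row N i a) (a i) = Suc (rk (row N i a) (b i)) \<or> rk (row N i a) (b i) = Suc (rk (row N i a) (a i)))}"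
  have step1: "row N' i a = row N i a"
    if N': "P N'" and agreeS: "\<forall>x\<in>S. x \<in> cp_concept n m X N' \<longleftrightarrow> x \<in> cp_concept n m X N"
      and i: "i < n" and a: "a \<in> outcomes n m" and a0: "\<forall>l<n. l \<notin> Pa i \<and> l \<noteq> i \<longrightarrow> a l = 0" for N' i a
  proof -
    have comp': "complete_cpnet n m N'" and acyc': "acyclic_cpnet n N'" using N' unfolding P_def valid_def by blast+
    define r where "r = row N i a"
    define r' where "r' = row N' i a"
    have r: "r \<subseteq> {..<m} \<times> {..<m}" "strict_linear_order_on {..<m} r" using rowslo[OF comp i a] by (auto simp: r_def)
    have r': "r' \<subseteq> {..<m} \<times> {..<m}" "strict_linear_order_on {..<m} r'" using rowslo[OF comp' i a] by (auto simp: r'_def)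
    note RK = rk_props[OF finite_lessThan r]
    have RK3: "rk r ` {..<m} = {..<m}" using RK(3) by simp
    have iPa: "i \<notin> fst N i" using Pa i unfolding Pa_def by blast
    have iPa': "i \<notin> fst N' i" using complete_cpnetD(1)[OF comp' i] by blast
    have adj: "(p, q) \<in> r'" if pq0: "p < m" "q < m" "rk r p = Suc (rk r q)" for p q
    proof -
      define a1 where "a1 = a(i := p)"
      define b1 where "b1 = a(i := q)"
      have pq: "p \<noteq> q" using pq0(3) by auto
      have o1: "a1 \<in> outcomes n m" "b1 \<in> outcomes n m"
        using a pq0(1,2) i by (auto simp: a1_def b1_def outcomes_def PiE_def extensional_def)
      have sw1: "(a1, b1) \<in> swaps n m" by (rule swapsI[OF o1 i]) (auto simp: a1_def b1_def pq)
      have rows1: "row N i a1 = r" "row N i b1 = r" "row N' i a1 = r'" "row N' i b1 = r'"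
        using iPa iPa' by (simp_all add: row_def r_def r'_def a1_def b1_def restrict_upd_notin)
      have z1: "\<forall>l<n. l \<notin> Pa i \<and> l \<noteq> i \<longrightarrow> a1 l = 0" "\<forall>l<n. l \<notin> Pa i \<and> l \<noteq> i \<longrightarrow> b1 l = 0"
        using a0 by (auto simp: a1_def b1_def)
      have same1: "\<forall>l. l \<noteq> i \<longrightarrow> a1 l = b1 l" and same2: "\<forall>l. l \<noteq> i \<longrightarrow> b1 l = a1 l"
        by (simp_all add: a1_def b1_def)
      have ai: "a1 i = p" "b1 i = q" by (simp_all add: a1_def b1_def)
      have prq: "(p, q) \<in> r" using RK(1)[of p q] pq0 by simp
      show ?thesis
      proof (cases "(a1, b1) \<in> X")
        case True
        have "(a1, b1) \<in> S" unfolding S_def using True i ai same1 z1 rows1 pq pq0(3) by auto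
        then have "(a1, b1) \<in> cp_concept n m X N' \<longleftrightarrow> (a1, b1) \<in> cp_concept n m X N" using agreeS by blast
        moreover have "(a1, b1) \<in> cp_concept n m X N" using mem[OF comp acyc True i] ai same1 rows1 prq pq by simp
        ultimately show ?thesis using mem[OF comp' acyc' True i] ai same1 rows1 pq by simp
      next
        case False
        then have X2: "(b1, a1) \<in> X" using XS2[OF sw1] by blast
        have "(b1, a1) \<in> S" unfolding S_def using X2 i ai same2 z1 rows1 pq pq0(3) by auto
        then have "(b1, a1) \<in> cp_concept n m X N' \<longleftrightarrow> (b1, a1) \<in> cp_concept n m X N" using agreeS by blast
        moreover have "(q, p) \<notin> r" using slo_asym[OF r(2) prq] .
        then have "(b1, a1) \<notin> cp_concept n m X N" using mem[OF comp acyc X2 i] ai same2 rows1 pq by simp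
        ultimately have "(q, p) \<notin> r'" using mem[OF comp' acyc' X2 i] ai same2 rows1 pq by simp
        then show ?thesis using r'(2) pq0(1,2) pq by (auto simp: strict_linear_order_on_def total_on_def)
      qed
    qed
    have chain: "\<forall>p q. p < m \<longrightarrow> q < m \<longrightarrow> rk r p = rk r q + Suc d \<longrightarrow> (p, q) \<in> r'" for d
    proof (induction d)
      case 0 then show ?case using adj by simp
    next
      case (Suc d)
      show ?case
      proof (intro allI impI)
        fix p q assume pq: "p < m" "q < m" "rk r p = rk r q + Suc (Suc d)"
        have "rk r p < m" using RK3 pq(1) by auto
        then have "rk r q + Suc d \<in> rk r ` {..<m}" using RK3 pq(3) by auto
        then obtain w where w: "w < m" "rk r w = rk r q + Suc d" by auto
        have "(w, q) \<in> r'" using Suc.IH w pq(2) by blast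
        moreover have "(p, w) \<in> r'" using adj[OF pq(1) w(1)] pq(3) w(2) by simp
        ultimately show "(p, q) \<in> r'" using r'(2) by (auto simp: strict_linear_order_on_def dest: transD)
      qed
    qed
    have sub: "r \<subseteq> r'"
    proof
      fix x assume xr: "x \<in> r"
      then obtain p q where x: "x = (p, q)" "p < m" "q < m" using r(1) by auto
      then have "rk r q < rk r p" using RK(1) xr by auto
      then obtain d where "rk r p = rk r q + Suc d" using less_iff_Suc_add by auto
      then show "x \<in> r'" using chain x by auto
    qed
    have "r' \<subseteq> r"
    proof
      fix x assume x': "x \<in> r'"
      then obtain p q where x: "x = (p, q)" "p < m" "q < m" using r'(1) by auto
      have pq: "p \<noteq> q" using x' x r'(2) by (auto simp: strict_linear_order_on_def irrefl_def)
      show "x \<in> r"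
      proof (rule ccontr)
        assume "x \<notin> r"
        then have "(q, p) \<in> r" using r(2) x pq by (auto simp: strict_linear_order_on_def total_on_def)
        then have "(q, p) \<in> r'" using sub by blast
        then show False using x' x slo_asym[OF r'(2)] by blast
      qed
    qed
    then show ?thesis using sub by (simp add: r_def r'_def)
  qed
  define zx where "zx i \<gamma> = (\<lambda>l. if l \<in> Pa i then \<gamma> l else if l < n then 0 else undefined)" for i and \<gamma> :: "nat \<Rightarrow> nat"
  have zxp: "zx i \<gamma> \<in> outcomes n m" "restrict (zx i \<gamma>) (Pa i) = \<gamma>" "\<forall>l<n. l \<notin> Pa i \<and> l \<noteq> i \<longrightarrow> zx i \<gamma> l = 0"
    if "i < n" "\<gamma> \<in> assignments (Pa i) m" for i \<gamma>
  proof -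
    have Pn: "Pa i \<subseteq> {..<n}" using Pa that(1) by blast
    show "zx i \<gamma> \<in> outcomes n m" "restrict (zx i \<gamma>) (Pa i) = \<gamma>"
      unfolding zx_def using zext[OF Pn that(2) m1] by blast+
    show "\<forall>l<n. l \<notin> Pa i \<and> l \<noteq> i \<longrightarrow> zx i \<gamma> l = 0" by (simp add: zx_def)
  qed
  have step2: "Pa i \<subseteq> fst N' i"
    if N': "P N'" and agreeS: "\<forall>x\<in>S. x \<in> cp_concept n m X N' \<longleftrightarrow> x \<in> cp_concept n m X N" and i: "i < n" for N' i
  proof
    fix j assume j: "j \<in> Pa i"
    obtain \<gamma> \<gamma>' where g: "\<gamma> \<in> assignments (Pa i) m" "\<gamma>' \<in> assignments (Pa i) m"
      "\<forall>l\<in>Pa i - {j}. \<gamma> l = \<gamma>' l" "snd N i \<gamma> \<noteq> snd N i \<gamma>'"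
      using complete_cpnetD(3)[OF comp i] j unfolding Pa_def by blast
    have e1: "row N' i (zx i \<gamma>) = snd N i \<gamma>"
      using step1[OF N' agreeS i zxp(1)[OF i g(1)] zxp(3)[OF i g(1)]] zxp(2)[OF i g(1)]
      by (simp add: row_def Pa_def)
    have e2: "row N' i (zx i \<gamma>') = snd N i \<gamma>'"
      using step1[OF N' agreeS i zxp(1)[OF i g(2)] zxp(3)[OF i g(2)]] zxp(2)[OF i g(2)]
      by (simp add: row_def Pa_def)
    show "j \<in> fst N' i"
    proof (rule ccontr)
      assume nj: "j \<notin> fst N' i"
      have "restrict (zx i \<gamma>) (fst N' i) = restrict (zx i \<gamma>') (fst N' i)"
      proof (rule restrict_ext)
        fix l assume "l \<in> fst N' i"
        then have "l \<noteq> j" using nj by blast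
        then show "zx i \<gamma> l = zx i \<gamma>' l" using g(3) by (simp add: zx_def)
      qed
      then have "row N' i (zx i \<gamma>) = row N' i (zx i \<gamma>')" by (simp add: row_def)
      then show False using e1 e2 g(4) by simp
    qed
  qed
  have step3: "fst N' i = Pa i"
    if N': "P N'" and agreeS: "\<forall>x\<in>S. x \<in> cp_concept n m X N' \<longleftrightarrow> x \<in> cp_concept n m X N" and i: "i < n" for N' i
  proof -
    have comp': "complete_cpnet n m N'" using N' unfolding P_def valid_def by blast
    have fin': "finite (fst N' i)" if "i < n" for i
    proof -
      have "fst N' i \<subseteq> {..<n}" using complete_cpnetD(1)[OF comp' that] by blast
      then show ?thesis using finite_subset by blast
    qed
    have le: "\<forall>i\<in>{..<n}. card (Pa i) \<le> card (fst N' i)" using step2[OF N' agreeS] fin' by (auto intro: card_mono)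
    have "s N' \<le> s N" using maxN N' by blast
    have eqc: "\<forall>i\<in>{..<n}. card (Pa i) = card (fst N' i)"
    proof (rule ccontr)
      assume "\<not> (\<forall>i\<in>{..<n}. card (Pa i) = card (fst N' i))"
      then have "\<exists>i\<in>{..<n}. card (Pa i) < card (fst N' i)" using le by force
      then have "s N < s N'" unfolding s_def Pa_def using sum_strict_mono_ex1[of "{..<n}"] le by (simp add: Pa_def)
      then show False using \<open>s N' \<le> s N\<close> by simp
    qed
    show ?thesis using card_subset_eq[OF fin'[OF i] step2[OF N' agreeS i]] eqc i by simp
  qed
  have teach: "c' = cp_concept n m X N"
    if c': "c' \<in> L" and agreeS: "\<forall>x\<in>S. x \<in> c' \<longleftrightarrow> x \<in> cp_concept n m X N" for c'
  proof -
    obtain N' where N': "P N'" and c'N: "c' = cp_concept n m X N'"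
      using c' L(1) unfolding C_ac_def P_def valid_def by auto
    have comp': "complete_cpnet n m N'" and acyc': "acyclic_cpnet n N'" using N' unfolding P_def valid_def by blast+
    have agreeS': "\<forall>x\<in>S. x \<in> cp_concept n m X N' \<longleftrightarrow> x \<in> cp_concept n m X N" using agreeS c'N by simp
    have "x \<in> cp_concept n m X N' \<longleftrightarrow> x \<in> cp_concept n m X N" if x: "x \<in> X" for x
    proof -
      obtain a b where ab: "x = (a, b)" by (cases x)
      have sab: "(a, b) \<in> swaps n m" using x ab XS1 by blast
      obtain i where i: "i < n" "a i \<noteq> b i" "\<forall>l. l \<noteq> i \<longrightarrow> a l = b l" using swapsD(3)[OF sab] by blast
      have ao: "a \<in> outcomes n m" using swapsD(1)[OF sab] .
      have Pn: "Pa i \<subseteq> {..<n}" using Pa i(1) by blast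
      define \<gamma> where "\<gamma> = restrict a (Pa i)"
      have g: "\<gamma> \<in> assignments (Pa i) m" unfolding \<gamma>_def using rest_assign[OF ao Pn] .
      have s1: "row N' i (zx i \<gamma>) = row N i (zx i \<gamma>)"
        using step1[OF N' agreeS' i(1) zxp(1)[OF i(1) g] zxp(3)[OF i(1) g]] .
      have fe: "fst N' i = Pa i" using step3[OF N' agreeS' i(1)] .
      have "row N' i a = row N' i (zx i \<gamma>)" using zxp(2)[OF i(1) g] fe by (simp add: row_def \<gamma>_def)
      also have "\<dots> = row N i (zx i \<gamma>)" by (rule s1)
      also have "\<dots> = row N i a" using zxp(2)[OF i(1) g] by (simp add: row_def \<gamma>_def Pa_def)
      finally have "row N' i a = row N i a" .
      then show ?thesis using mem[OF comp acyc _ i] mem[OF comp' acyc' _ i] x ab by simp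
    qed
    moreover have "cp_concept n m X N' \<subseteq> X" "cp_concept n m X N \<subseteq> X" by (auto simp: cp_concept_def)
    ultimately show ?thesis using c'N by blast
  qed
  have finS: "finite S" using finX by (rule finite_subset[rotated]) (auto simp: S_def)
  have tS: "teaching_set X L (cp_concept n m X N) S"
    unfolding teaching_set_def using finS teach by (auto simp: S_def)
  define T where "T = (SIGMA i:{..<n}. assignments (Pa i) m \<times> {..<m - 1})"
  define \<phi> where "\<phi> x = (let a = fst x; b = snd x; i = (LEAST i. a i \<noteq> b i)
       in (i, restrict a (Pa i), min (rk (row N i a) (a i)) (rk (row N i a) (b i))))" for x :: "(nat \<Rightarrow> nat) \<times> (nat \<Rightarrow> nat)"
  have Sdest: "\<exists>i<n. a i \<noteq> b i \<and> (\<forall>l. l \<noteq> i \<longrightarrow> a l = b l) \<and> (\<forall>l<n. l \<notin> Pa i \<and> l \<noteq> i \<longrightarrow> a l = 0)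
      \<and> (rk (row N i a) (a i) = Suc (rk (row N i a) (b i)) \<or> rk (row N i a) (b i) = Suc (rk (row N i a) (a i)))
      \<and> \<phi> (a, b) = (i, restrict a (Pa i), min (rk (row N i a) (a i)) (rk (row N i a) (b i)))
      \<and> a \<in> outcomes n m \<and> b \<in> outcomes n m \<and> (a, b) \<in> X"
    if abS: "(a, b) \<in> S" for a b
  proof -
    obtain i where i: "i < n" "a i \<noteq> b i" "\<forall>l. l \<noteq> i \<longrightarrow> a l = b l" "\<forall>l<n. l \<notin> Pa i \<and> l \<noteq> i \<longrightarrow> a l = 0"
      "rk (row N i a) (a i) = Suc (rk (row N i a) (b i)) \<or> rk (row N i a) (b i) = Suc (rk (row N i a) (a i))"
      and X: "(a, b) \<in> X"
    proof -
      have "(a, b) \<in> X \<and> (\<exists>i<n. a i \<noteq> b i \<and> (\<forall>l. l \<noteq> i \<longrightarrow> a l = b l)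
        \<and> (\<forall>l<n. l \<notin> Pa i \<and> l \<noteq> i \<longrightarrow> a l = 0)
        \<and> (rk (row N i a) (a i) = Suc (rk (row N i a) (b i)) \<or> rk (row N i a) (b i) = Suc (rk (row N i a) (a i))))"
        using abS unfolding S_def by simp
      then show ?thesis using that by blast
    qed
    have "(a, b) \<in> swaps n m" using X XS1 by blast
    then have o: "a \<in> outcomes n m" "b \<in> outcomes n m" using swapsD by blast+
    have "(LEAST j. a j \<noteq> b j) = i" using least_i[OF i(2,3)] .
    then show ?thesis using i o X by (simp add: \<phi>_def Let_def)
  qed
  have rkm: "rk (row N i a) v < m" if "i < n" "a \<in> outcomes n m" "v < m" for i a v
  proof -
    have r: "row N i a \<subseteq> {..<m} \<times> {..<m}" "strict_linear_order_on {..<m} (row N i a)"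
      using rowslo[OF comp that(1,2)] by blast+
    show ?thesis using rk_props(3)[OF finite_lessThan r] that(3) by auto
  qed
  have img: "\<phi> ` S \<subseteq> T"
  proof
    fix y assume "y \<in> \<phi> ` S"
    then obtain a b where ab: "(a, b) \<in> S" "y = \<phi> (a, b)" by auto
    from Sdest[OF ab(1)] obtain i where i: "i < n" "a i \<noteq> b i"
      "rk (row N i a) (a i) = Suc (rk (row N i a) (b i)) \<or> rk (row N i a) (b i) = Suc (rk (row N i a) (a i))"
      "\<phi> (a, b) = (i, restrict a (Pa i), min (rk (row N i a) (a i)) (rk (row N i a) (b i)))"
      "a \<in> outcomes n m" "b \<in> outcomes n m" by blast
    have Pn: "Pa i \<subseteq> {..<n}" using Pa i(1) by blast
    have "rk (row N i a) (a i) < m" "rk (row N i a) (b i) < m"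
      using rkm[OF i(1) i(5)] outcome_lt[OF i(5) i(1)] outcome_lt[OF i(6) i(1)] by blast+
    then have "min (rk (row N i a) (a i)) (rk (row N i a) (b i)) < m - 1" using i(3) by auto
    then show "y \<in> T" using ab(2) i(4) i(1) rest_assign[OF i(5) Pn] by (simp add: T_def)
  qed
  have inj: "inj_on \<phi> S"
  proof (rule inj_onI)
    fix x x' assume x: "x \<in> S" and x': "x' \<in> S" and eq: "\<phi> x = \<phi> x'"
    obtain a b where ab: "x = (a, b)" by (cases x)
    obtain a' b' where ab': "x' = (a', b')" by (cases x')
    from Sdest[OF x[unfolded ab]] obtain i where i: "i < n" "a i \<noteq> b i" "\<forall>l. l \<noteq> i \<longrightarrow> a l = b l"
      "\<forall>l<n. l \<notin> Pa i \<and> l \<noteq> i \<longrightarrow> a l = 0"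
      "rk (row N i a) (a i) = Suc (rk (row N i a) (b i)) \<or> rk (row N i a) (b i) = Suc (rk (row N i a) (a i))"
      "\<phi> (a, b) = (i, restrict a (Pa i), min (rk (row N i a) (a i)) (rk (row N i a) (b i)))"
      "a \<in> outcomes n m" "b \<in> outcomes n m" "(a, b) \<in> X" by blast
    from Sdest[OF x'[unfolded ab']] obtain i' where i': "i' < n" "a' i' \<noteq> b' i'" "\<forall>l. l \<noteq> i' \<longrightarrow> a' l = b' l"
      "\<forall>l<n. l \<notin> Pa i' \<and> l \<noteq> i' \<longrightarrow> a' l = 0"
      "rk (row N i' a') (a' i') = Suc (rk (row N i' a') (b' i')) \<or> rk (row N i' a') (b' i') = Suc (rk (row N i' a') (a' i'))"
      "\<phi> (a', b') = (i', restrict a' (Pa i'), min (rk (row N i' a') (a' i')) (rk (row N i' a') (b' i')))"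
      "a' \<in> outcomes n m" "b' \<in> outcomes n m" "(a', b') \<in> X" by blast
    have ii: "i' = i" using eq ab ab' i(6) i'(6) by simp
    have rr: "restrict a' (Pa i) = restrict a (Pa i)" using eq ab ab' i(6) i'(6) ii by simp
    have rowe: "row N i a' = row N i a" using rr by (simp add: row_def Pa_def)
    define r where "r = row N i a"
    have r: "r \<subseteq> {..<m} \<times> {..<m}" "strict_linear_order_on {..<m} r" using rowslo[OF comp i(1) i(7)] by (auto simp: r_def)
    have rinj: "inj_on (rk r) {..<m}" using rk_props(2)[OF finite_lessThan r] by simp
    have mn: "min (rk r (a' i)) (rk r (b' i)) = min (rk r (a i)) (rk r (b i))"
      using eq ab ab' i(6) i'(6) ii rowe by (simp add: r_def)
    have lts: "a i < m" "b i < m" "a' i < m" "b' i < m"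
      using outcome_lt i(1) i(7,8) i'(7,8) by blast+
    have c5: "rk r (a i) = Suc (rk r (b i)) \<or> rk r (b i) = Suc (rk r (a i))" using i(5) by (simp add: r_def)
    have c5': "rk r (a' i) = Suc (rk r (b' i)) \<or> rk r (b' i) = Suc (rk r (a' i))" using i'(5) ii rowe by (simp add: r_def)
    have "(rk r (a' i) = rk r (a i) \<and> rk r (b' i) = rk r (b i)) \<or> (rk r (a' i) = rk r (b i) \<and> rk r (b' i) = rk r (a i))"
      using mn c5 c5' by auto
    then have vals: "(a' i = a i \<and> b' i = b i) \<or> (a' i = b i \<and> b' i = a i)"
      using rinj lts by (auto simp: inj_on_def)
    have offi: "a' l = a l" if "l \<noteq> i" for l
    proof (cases "l < n")
      case True
      show ?thesis
      proof (cases "l \<in> Pa i")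
        case True
        then show ?thesis using rr by (metis restrict_apply')
      next
        case False
        then show ?thesis using i(4) i'(4) ii \<open>l < n\<close> that by simp
      qed
    next
      case False
      then show ?thesis using i(7) i'(7) by (auto simp: outcomes_def PiE_def extensional_def)
    qed
    show "x = x'"
    proof (cases "a' i = a i \<and> b' i = b i")
      case True
      have "a' = a"
      proof (rule ext)
        fix l show "a' l = a l" using True offi by (cases "l = i") auto
      qed
      moreover have "b' = b"
      proof (rule ext)
        fix l show "b' l = b l" using True offi i(3) i'(3) ii by (cases "l = i") auto
      qed
      ultimately show ?thesis using ab ab' by simp
    next
      case False
      then have v: "a' i = b i" "b' i = a i" using vals by auto
      have "a' = b"
      proof (rule ext)
        fix l show "a' l = b l" using v offi i(3) by (cases "l = i") auto
      qed
      moreover have "b' = a"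
      proof (rule ext)
        fix l show "b' l = a l" using v offi i(3) i'(3) ii by (cases "l = i") auto
      qed
      ultimately have "(b, a) \<in> X" using i'(9) by simp
      moreover have "(a, b) \<in> swaps n m" using i(9) XS1 by blast
      ultimately show ?thesis using XS2 i(9) by blast
    qed
  qed
  have finPa: "finite (Pa i)" if "i < n" for i
  proof -
    have "Pa i \<subseteq> {..<n}" using Pa that by blast
    then show ?thesis using finite_subset by blast
  qed
  have finT: "finite T" unfolding T_def by (auto intro: finite_assignments finPa)
  have "card S \<le> card T" using card_inj_on_le[OF inj img finT] .
  also have "card T = (\<Sum>i<n. m ^ card (Pa i) * (m - 1))"
  proof -
    have "card T = (\<Sum>i<n. card (assignments (Pa i) m \<times> {..<m - 1}))"
      unfolding T_def by (rule card_SigmaI) (auto intro: finite_assignments finPa)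
    also have "\<dots> = (\<Sum>i<n. m ^ card (Pa i) * (m - 1))"
      by (rule sum.cong) (auto simp: card_cartesian_product card_assignments finPa)
    finally show ?thesis .
  qed
  also have "\<dots> = (m - 1) * (\<Sum>i<n. m ^ card (Pa i))" by (simp add: sum_distrib_left mult.commute)
  also have "\<dots> \<le> (m - 1) * (\<Sum>p<n. m ^ min p k)"
    using graph_bounds(1)[OF Pa acyc[unfolded acyclic_cpnet_def, folded Pa_def] kb[unfolded k_bounded_cpnet_def, folded Pa_def] m1]
    by simp
  finally have "card S \<le> (m - 1) * (\<Sum>p<n. m ^ min p k)" .
  moreover have "cp_concept n m X N \<in> L" using PN by (simp add: P_def)
  ultimately show ?thesis using tS by blast
qed


lemma TD_le:
  assumes "teaching_set X L c S"
  shows "TD X L c \<le> card S"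
  unfolding TD_def using assms by (intro Least_le) blast

lemma rtd_layer_sub: "rtd_layer X C i \<subseteq> C"
  by (induction i) (auto simp: Let_def)

theorem theorem2:
  fixes n m k :: nat and X :: "((nat \<Rightarrow> nat) \<times> (nat \<Rightarrow> nat)) set"
  assumes "n \<ge> 1" and "m \<ge> 2" and "k < n"
    and "is_swap_instance_space n m X"
  shows "RTD X (C_ac n m k X) = (m - 1) * M_k n m k
       \<and> RTD X (C_ac n m k X) = (m - 1) * (n - k) * m ^ k + m ^ k - 1"
proof -
  note m = assms(2) and XS = assms(4)
  have m1: "m \<ge> 1" using m by simp
  define C where "C = C_ac n m k X"
  define V where "V = (m - 1) * (\<Sum>p<n. m ^ min p k)"
  have XS1: "X \<subseteq> swaps n m" using XS unfolding is_swap_instance_space_def by blast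
  have finX: "finite X"
  proof -
    have "X \<subseteq> outcomes n m \<times> outcomes n m" using XS1 by (auto simp: swaps_def)
    then show ?thesis using outcomes_finite finite_subset by blast
  qed
  have CX: "\<forall>c\<in>C. c \<subseteq> X" by (auto simp: C_def C_ac_def cp_concept_def)
  have finC: "finite C"
  proof -
    have "C \<subseteq> Pow X" using CX by blast
    then show ?thesis using finX finite_subset by blast
  qed
  have "\<exists>N. valid n m k N \<and> (\<forall>i<n. \<forall>a\<in>outcomes n m. snd N i (restrict a (fst N i)) =
           (\<lambda>i (\<delta>::nat \<Rightarrow> nat). {(p, q). p \<in> {..<m} \<and> q \<in> {..<m} \<and> id q < id p}) i (restrict a ((\<lambda>i. {}) i)))"
  proof (rule dummy_removal[OF m1])
    show "\<forall>i<n. (\<lambda>i. {}) i \<subseteq> {..<n} - {i}" by simp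
    show "acyclic {(j, i). i < n \<and> j \<in> (\<lambda>i. {}) i}" by (simp add: acyclic_def)
    show "\<forall>i<n. card ((\<lambda>i. {}) i) \<le> k" by simp
    show "\<forall>i<n. \<forall>\<delta>\<in>assignments ((\<lambda>i. {}) i) m.
      (\<lambda>i (\<delta>::nat \<Rightarrow> nat). {(p, q). p \<in> {..<m} \<and> q \<in> {..<m} \<and> id q < id p}) i \<delta> \<subseteq> {..<m} \<times> {..<m} \<and>
      strict_linear_order_on {..<m} ((\<lambda>i (\<delta>::nat \<Rightarrow> nat). {(p, q). p \<in> {..<m} \<and> q \<in> {..<m} \<and> id q < id p}) i \<delta>)"
      using slo_of_inj[of id "{..<m}"] by auto
  qed
  then obtain N0 where "valid n m k N0" by blast
  then have Cne: "C \<noteq> {}" unfolding C_def C_ac_def valid_def by blast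
  have TDge: "V \<le> TD X C c" if cC: "c \<in> C" for c
  proof -
    obtain N where N: "valid n m k N" and cN: "c = cp_concept n m X N"
      using cC unfolding C_def C_ac_def valid_def by blast
    have "teaching_set X C c X" unfolding teaching_set_def using finX CX cC by auto
    then have "\<exists>t. \<exists>S. teaching_set X C c S \<and> card S = t" by blast
    then have "\<exists>S. teaching_set X C c S \<and> card S = TD X C c"
      unfolding TD_def by (rule LeastI_ex)
    then obtain S where S: "teaching_set X C c S" "card S = TD X C c" by blast
    have "V \<le> card S" unfolding V_def
      using lower_TD[OF m XS N] S(1) cN by (simp add: C_def)
    then show ?thesis using S(2) by simp
  qed
  have TDmin_ge: "V \<le> TD_min X C"
    unfolding TD_min_def using finC Cne TDge by (subst Min_ge_iff) auto
  define Sset where "Sset = {TD_min X (rtd_layer X C i) | i. rtd_layer X C i \<noteq> {}}"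
  have finS: "finite Sset"
  proof -
    have "Sset \<subseteq> (\<lambda>L. TD_min X L) ` Pow C" unfolding Sset_def using rtd_layer_sub by blast
    then show ?thesis using finC finite_subset by blast
  qed
  have inS: "TD_min X C \<in> Sset" unfolding Sset_def using Cne by (auto intro: exI[of _ 0])
  have leV: "x \<le> V" if xS: "x \<in> Sset" for x
  proof -
    obtain i where i: "x = TD_min X (rtd_layer X C i)" "rtd_layer X C i \<noteq> {}" using xS unfolding Sset_def by blast
    define Li where "Li = rtd_layer X C i"
    have Lsub: "Li \<subseteq> C_ac n m k X" using rtd_layer_sub unfolding Li_def C_def by blast
    have finL: "finite Li" using Lsub finC unfolding C_def using finite_subset by blast
    obtain c S where c: "c \<in> Li" "teaching_set X Li c S" "card S \<le> V"
      using upper_TD[OF m XS Lsub] i(2) unfolding Li_def V_def by blast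
    have "TD_min X Li \<le> TD X Li c" unfolding TD_min_def using finL c(1) by (intro Min_le) auto
    also have "\<dots> \<le> card S" by (rule TD_le[OF c(2)])
    finally show ?thesis using c(3) i(1) unfolding Li_def by simp
  qed
  have "RTD X C = V"
  proof -
    have "RTD X C = Max Sset" by (simp add: RTD_def Sset_def)
    moreover have "Max Sset \<le> V" using finS inS leV by (subst Max_le_iff) auto
    moreover have "V \<le> Max Sset" using TDmin_ge Max_ge[OF finS inS] by linarith
    ultimately show ?thesis by simp
  qed
  moreover have "V = (m - 1) * M_k n m k" unfolding V_def using Mk_sum(1)[OF m] assms(3) by simp
  moreover have "(m - 1) * M_k n m k = (m - 1) * (n - k) * m ^ k + m ^ k - 1"
    using Mk_sum(2)[OF m] assms(3) by simp
  ultimately show ?thesis unfolding C_def by simp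
qed

end
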